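(* Let $f:(\mathbb R^2,q)\to(\mathbb R^3,p)$ be a smooth germ with a corank 1 singularity at $q$ whose curvature parabola $\Delta_p$ is a non-degenerate parabola or a half-line (equivalently, $j^2f$ is $\mathcal A^2$-equivalent to $(x,y^2,xy)$ or $(x,y^2,0)$). If $(u,v)$ is a coordinate system with $f_u(q)\ne0$ and $f_v(q)=0$, then $$v_a=\frac{(f_u\times f_{vv})\times f_u}{|(f_u\times f_{vv})\times f_u|}(q),$$ and if moreover $|f_u(q)|=|f_{vv}(q)|=1$ and $\langle f_u(q),f_{vv}(q)\rangle=0$, then $v_a=f_{vv}(q)$.
   Context: $T_pM=\operatorname{im}df_q$, $N_pM$ its orthogonal complement with a fixed orientation. First fundamental form $I(X,Y)=\langle df_qX,df_qY\rangle$; second fundamental form $II$: the symmetric bilinear map $T_q\mathbb R^2\times T_q\mathbb R^2\to N_pM$ with $II(\partial_u,\partial_u)=f_{uu}(q)^\perp$, $II(\partial_u,\partial_v)=f_{uv}(q)^\perp$, $II(\partial_v,\partial_v)=f_{vv}(q)^\perp$ ($\perp$ = orthogonal projection to $N_pM$). Curvature parabola $\Delta_p=\{II(X,X): I(X,X)=1\}\subset N_pM$. Axial vector $v_a$: if $\Delta_p$ is a non-degenerate parabola, the unit vector along its axis of symmetry pointing to its interior; if $\Delta_p$ is a half-line, the unit vector in the direction in which the half-line extends. *)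

theory Defs
  imports "HOL-Analysis.Analysis" "HOL-Analysis.Cross3"
begin

definition pd :: "real \<times> real \<Rightarrow> (real \<times> real \<Rightarrow> real^3) \<Rightarrow> real \<times> real \<Rightarrow> real^3" where
  "pd d g x = vector_derivative (\<lambda>t. g (x + t *\<^sub>R d)) (at 0)"

definition e_u :: "real \<times> real" where "e_u = (1, 0)"
definition e_v :: "real \<times> real" where "e_v = (0, 1)"

fun pds :: "(real \<times> real) list \<Rightarrow> (real \<times> real \<Rightarrow> real^3) \<Rightarrow> real \<times> real \<Rightarrow> real^3" where
  "pds [] g = g"
| "pds (d # ds) g = pd d (pds ds g)"

definition smooth_on :: "(real \<times> real) set \<Rightarrow> (real \<times> real \<Rightarrow> real^3) \<Rightarrow> bool" where
  "smooth_on S g \<longleftrightarrow> open S \<and>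
     (\<forall>ds. set ds \<subseteq> {e_u, e_v} \<longrightarrow>
        continuous_on S (pds ds g) \<and>
        (\<forall>d\<in>{e_u, e_v}. \<forall>x\<in>S. (\<lambda>t. pds ds g (x + t *\<^sub>R d)) differentiable (at 0)))"

abbreviation f_u where "f_u f \<equiv> pd e_u f"
abbreviation f_v where "f_v f \<equiv> pd e_v f"
abbreviation f_uu where "f_uu f \<equiv> pd e_u (pd e_u f)"
abbreviation f_uv where "f_uv f \<equiv> pd e_v (pd e_u f)"
abbreviation f_vv where "f_vv f \<equiv> pd e_v (pd e_v f)"

definition dfq :: "(real \<times> real \<Rightarrow> real^3) \<Rightarrow> real \<times> real \<Rightarrow> real \<times> real \<Rightarrow> real^3" where
  "dfq f q X = fst X *\<^sub>R f_u f q + snd X *\<^sub>R f_v f q"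

definition tangent_space :: "(real \<times> real \<Rightarrow> real^3) \<Rightarrow> real \<times> real \<Rightarrow> (real^3) set" where
  "tangent_space f q = range (dfq f q)"

definition normal_space :: "(real \<times> real \<Rightarrow> real^3) \<Rightarrow> real \<times> real \<Rightarrow> (real^3) set" where
  "normal_space f q = {n. \<forall>t\<in>tangent_space f q. n \<bullet> t = 0}"

definition nperp :: "(real \<times> real \<Rightarrow> real^3) \<Rightarrow> real \<times> real \<Rightarrow> real^3 \<Rightarrow> real^3" where
  "nperp f q w = (THE n. n \<in> normal_space f q \<and> w - n \<in> tangent_space f q)"

definition first_ff :: "(real \<times> real \<Rightarrow> real^3) \<Rightarrow> real \<times> real \<Rightarrow> real \<times> real \<Rightarrow> real \<times> real \<Rightarrow> real" where
  "first_ff f q X Y = dfq f q X \<bullet> dfq f q Y"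

definition second_ff :: "(real \<times> real \<Rightarrow> real^3) \<Rightarrow> real \<times> real \<Rightarrow> real \<times> real \<Rightarrow> real \<times> real \<Rightarrow> real^3" where
  "second_ff f q X Y =
     (fst X * fst Y) *\<^sub>R nperp f q (f_uu f q)
   + (fst X * snd Y + snd X * fst Y) *\<^sub>R nperp f q (f_uv f q)
   + (snd X * snd Y) *\<^sub>R nperp f q (f_vv f q)"

definition curvature_parabola :: "(real \<times> real \<Rightarrow> real^3) \<Rightarrow> real \<times> real \<Rightarrow> (real^3) set" where
  "curvature_parabola f q = {second_ff f q X X | X. first_ff f q X X = 1}"

text \<open>Non-degenerate parabola: vertex c, unit axis direction w (pointing to the interior),
  unit direction e orthogonal to the axis, and k > 0.\<close>
definition parabola_with_axis :: "(real^3) set \<Rightarrow> real^3 \<Rightarrow> bool" where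
  "parabola_with_axis P w \<longleftrightarrow> (\<exists>c e k. norm e = 1 \<and> norm w = 1 \<and> e \<bullet> w = 0 \<and> k > 0 \<and>
       P = {c + s *\<^sub>R e + (k * s\<^sup>2) *\<^sub>R w | s. True})"

definition nondeg_parabola :: "(real^3) set \<Rightarrow> bool" where
  "nondeg_parabola P \<longleftrightarrow> (\<exists>w. parabola_with_axis P w)"

definition half_line_dir :: "(real^3) set \<Rightarrow> real^3 \<Rightarrow> bool" where
  "half_line_dir P w \<longleftrightarrow> norm w = 1 \<and> (\<exists>c. P = {c + t *\<^sub>R w | t. t \<ge> 0})"

definition half_line :: "(real^3) set \<Rightarrow> bool" where
  "half_line P \<longleftrightarrow> (\<exists>w. half_line_dir P w)"

definition axial_vector :: "(real^3) set \<Rightarrow> real^3 \<Rightarrow> bool" where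
  "axial_vector P w \<longleftrightarrow>
     (nondeg_parabola P \<and> parabola_with_axis P w) \<or> (half_line P \<and> half_line_dir P w)"

end

theory Submission imports Defs "HOL-Computational_Algebra.Polynomial" begin

lemma cross_cross: "cross3 (cross3 a b) a = (a \<bullet> a) *\<^sub>R b - (a \<bullet> b) *\<^sub>R (a::real^3)"
  by (simp add: cross3_simps forall_3)

lemma quartic_zero:
  fixes a0 a1 a2 a3 a4 :: real
  assumes "\<forall>y. a0 + a1*y + a2*y^2 + a3*y^3 + a4*y^4 = 0"
  shows "a4 = 0 \<and> a2 = 0"
proof -
  have "\<forall>y. poly [:a0,a1,a2,a3,a4:] y = 0" using assms by (simp add: algebra_simps power2_eq_square power3_eq_cube power4_eq_xxxx)
  then have "[:a0,a1,a2,a3,a4:] = 0" using poly_all_0_iff_0 by blast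
  then show ?thesis by simp
qed

lemma vquad_zero:
  fixes v0 v1 v2 :: "real^3"
  assumes "\<And>y. v0 + y *\<^sub>R v1 + y\<^sup>2 *\<^sub>R v2 = 0"
  shows "v2 = 0"
proof -
  have "v0 = 0" using assms[of 0] by simp
  moreover have "v0 + v1 + v2 = 0" using assms[of 1] by simp
  moreover have "v0 - v1 + v2 = 0" using assms[of "-1"] by simp
  ultimately show ?thesis by (metis add_diff_cancel_left' diff_add_cancel scaleR_2 scaleR_eq_0_iff zero_neq_numeral add.left_neutral)
qed

lemma parab_axis:
  fixes A0 U C c e w :: "real^3" and k :: real
  assumes P1: "P = range (\<lambda>y. A0 + y *\<^sub>R U + y\<^sup>2 *\<^sub>R C)"
    and ne: "norm e = 1" and nw: "norm w = 1" and ew: "e \<bullet> w = 0" and k: "k > 0"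
    and P2: "P = {c + s *\<^sub>R e + (k * s\<^sup>2) *\<^sub>R w | s. True}"
  shows "C \<noteq> 0 \<and> w = (1 / norm C) *\<^sub>R C"
proof -
  define g where "g y = A0 + y *\<^sub>R U + y\<^sup>2 *\<^sub>R C" for y
  have ee: "e \<bullet> e = 1" using ne by (simp add: norm_eq_1)
  have ww: "w \<bullet> w = 1" using nw by (simp add: norm_eq_1)
  have we: "w \<bullet> e = 0" using ew by (simp add: inner_commute)
  have ex: "\<exists>s. g y = c + s *\<^sub>R e + (k * s\<^sup>2) *\<^sub>R w" for y
  proof -
    have "g y \<in> P" using P1 g_def by auto
    then show ?thesis using P2 by auto
  qed
  have rel: "(g y - c) \<bullet> w = k * ((g y - c) \<bullet> e)\<^sup>2
     \<and> g y - c - ((g y - c) \<bullet> e) *\<^sub>R e - ((g y - c) \<bullet> w) *\<^sub>R w = 0" for y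
  proof -
    obtain s where s: "g y = c + s *\<^sub>R e + (k * s\<^sup>2) *\<^sub>R w" using ex by blast
    have d: "g y - c = s *\<^sub>R e + (k * s\<^sup>2) *\<^sub>R w" using s by simp
    have de: "(g y - c) \<bullet> e = s" unfolding d by (simp add: inner_add_left ee we)
    have dw: "(g y - c) \<bullet> w = k * s\<^sup>2" unfolding d by (simp add: inner_add_left ww ew)
    show ?thesis using d de dw by simp
  qed
  define \<alpha> where "\<alpha> = (A0 - c) \<bullet> e"
  define \<beta> where "\<beta> = U \<bullet> e"
  define \<delta> where "\<delta> = C \<bullet> e"
  define p0 where "p0 = (A0 - c) \<bullet> w"
  define p1 where "p1 = U \<bullet> w"
  define p2 where "p2 = C \<bullet> w"
  have ge: "(g y - c) \<bullet> e = \<alpha> + \<beta> * y + \<delta> * y\<^sup>2" for y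
    unfolding g_def \<alpha>_def \<beta>_def \<delta>_def by (simp add: inner_add_left inner_diff_left algebra_simps)
  have gw: "(g y - c) \<bullet> w = p0 + p1 * y + p2 * y\<^sup>2" for y
    unfolding g_def p0_def p1_def p2_def by (simp add: inner_add_left inner_diff_left algebra_simps)
  have "\<forall>y. (p0 - k*\<alpha>^2) + (p1 - 2*k*\<alpha>*\<beta>)*y + (p2 - k*(\<beta>^2 + 2*\<alpha>*\<delta>))*y^2
       + (-2*k*\<beta>*\<delta>)*y^3 + (-k*\<delta>^2)*y^4 = 0"
  proof
    fix y
    have "p0 + p1 * y + p2 * y\<^sup>2 = k * (\<alpha> + \<beta> * y + \<delta> * y\<^sup>2)\<^sup>2" using rel[of y] ge[of y] gw[of y] by simp
    then show "(p0 - k*\<alpha>^2) + (p1 - 2*k*\<alpha>*\<beta>)*y + (p2 - k*(\<beta>^2 + 2*\<alpha>*\<delta>))*y^2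
       + (-2*k*\<beta>*\<delta>)*y^3 + (-k*\<delta>^2)*y^4 = 0"
      by (simp add: algebra_simps power2_eq_square power3_eq_cube power4_eq_xxxx)
  qed
  from quartic_zero[OF this] k have d0: "\<delta> = 0" and p2: "p2 = k * \<beta>^2" by auto
  have "C - \<delta> *\<^sub>R e - p2 *\<^sub>R w = 0"
  proof (rule vquad_zero)
    fix y
    have "g y - c - ((g y - c) \<bullet> e) *\<^sub>R e - ((g y - c) \<bullet> w) *\<^sub>R w = 0" using rel by blast
    then show "(A0 - c - \<alpha> *\<^sub>R e - p0 *\<^sub>R w) + y *\<^sub>R (U - \<beta> *\<^sub>R e - p1 *\<^sub>R w) + y\<^sup>2 *\<^sub>R (C - \<delta> *\<^sub>R e - p2 *\<^sub>R w) = 0"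
      unfolding ge gw unfolding g_def by (simp add: algebra_simps)
  qed
  then have C: "C = p2 *\<^sub>R w" using d0 by simp
  have "\<beta> \<noteq> 0"
  proof
    assume b0: "\<beta> = 0"
    have "c + (\<alpha>+1) *\<^sub>R e + (k * (\<alpha>+1)\<^sup>2) *\<^sub>R w \<in> P" using P2 by blast
    then obtain y where "g y = c + (\<alpha>+1) *\<^sub>R e + (k * (\<alpha>+1)\<^sup>2) *\<^sub>R w" using P1 g_def by auto
    then have "(g y - c) \<bullet> e = \<alpha> + 1" by (simp add: inner_add_left ee we)
    then show False using ge[of y] b0 d0 by simp
  qed
  then have pp: "p2 > 0" using p2 k by simp
  then have "norm C = p2" using C nw by simp
  then show ?thesis using C pp nw by auto
qed

lemma half_axis:
  fixes A0 U C c w :: "real^3"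
  assumes P1: "P = range (\<lambda>y. A0 + y *\<^sub>R U + y\<^sup>2 *\<^sub>R C)"
    and nw: "norm w = 1"
    and P2: "P = {c + t *\<^sub>R w | t. t \<ge> 0}"
  shows "C \<noteq> 0 \<and> w = (1 / norm C) *\<^sub>R C"
proof -
  define g where "g y = A0 + y *\<^sub>R U + y\<^sup>2 *\<^sub>R C" for y
  have ww: "w \<bullet> w = 1" using nw by (simp add: norm_eq_1)
  have ex: "\<exists>t. t \<ge> 0 \<and> g y = c + t *\<^sub>R w" for y
  proof -
    have "g y \<in> P" using P1 g_def by auto
    then show ?thesis using P2 by auto
  qed
  have rel: "(g y - c) \<bullet> w \<ge> 0 \<and> g y - c - ((g y - c) \<bullet> w) *\<^sub>R w = 0" for y
  proof -
    obtain t where t: "t \<ge> 0" "g y = c + t *\<^sub>R w" using ex by blast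
    have d: "g y - c = t *\<^sub>R w" using t by simp
    have dw: "(g y - c) \<bullet> w = t" unfolding d by (simp add: ww)
    show ?thesis using d dw t by simp
  qed
  define p0 where "p0 = (A0 - c) \<bullet> w"
  define p1 where "p1 = U \<bullet> w"
  define p2 where "p2 = C \<bullet> w"
  have gw: "(g y - c) \<bullet> w = p0 + p1 * y + p2 * y\<^sup>2" for y
    unfolding g_def p0_def p1_def p2_def by (simp add: inner_add_left inner_diff_left algebra_simps)
  have nn: "p0 + p1 * y + p2 * y\<^sup>2 \<ge> 0" for y using rel[of y] gw[of y] by simp
  have "C - p2 *\<^sub>R w = 0"
  proof (rule vquad_zero)
    fix y
    have "g y - c - ((g y - c) \<bullet> w) *\<^sub>R w = 0" using rel by blast
    then show "(A0 - c - p0 *\<^sub>R w) + y *\<^sub>R (U - p1 *\<^sub>R w) + y\<^sup>2 *\<^sub>R (C - p2 *\<^sub>R w) = 0"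
      unfolding gw unfolding g_def by (simp add: algebra_simps)
  qed
  then have C: "C = p2 *\<^sub>R w" by simp
  have "\<not> p2 < 0"
  proof
    assume n: "p2 < 0"
    define y where "y = sqrt ((\<bar>p0\<bar> + 1) / (- p2))"
    have y2: "y\<^sup>2 = (\<bar>p0\<bar> + 1) / (- p2)" unfolding y_def using n by (simp add: divide_nonneg_neg)
    have "p2 * y\<^sup>2 = - (\<bar>p0\<bar> + 1)" using n y2 by (simp add: field_simps)
    moreover have "(p0 + p1 * y + p2 * y\<^sup>2) + (p0 + p1 * (-y) + p2 * (-y)\<^sup>2) \<ge> 0" using nn[of y] nn[of "-y"] by simp
    ultimately show False by (simp add: algebra_simps)
  qed
  moreover have "p2 \<noteq> 0"
  proof
    assume z: "p2 = 0"
    have p1: "p1 = 0"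
    proof (rule ccontr)
      assume "p1 \<noteq> 0"
      then have "p0 + p1 * (- (\<bar>p0\<bar> + 1) / p1) + p2 * (- (\<bar>p0\<bar> + 1) / p1)\<^sup>2 = p0 - \<bar>p0\<bar> - 1" using z by simp
      then show False using nn[of "- (\<bar>p0\<bar> + 1) / p1"] by simp
    qed
    have "c + (\<bar>p0\<bar>+1) *\<^sub>R w \<in> P" unfolding P2 by (intro CollectI exI[of _ "\<bar>p0\<bar>+1"]) simp
    then obtain y where "g y = c + (\<bar>p0\<bar>+1) *\<^sub>R w" using P1 g_def by auto
    then have "(g y - c) \<bullet> w = \<bar>p0\<bar> + 1" by (simp add: ww)
    then show False using gw[of y] z p1 by simp
  qed
  ultimately have pp: "p2 > 0" by simp
  then have "norm C = p2" using C nw by simp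
  then show ?thesis using C pp nw by auto
qed

lemma tangent_eq:
  assumes fv: "f_v f q = 0"
  shows "tangent_space f q = range (\<lambda>t. t *\<^sub>R f_u f q)"
  unfolding tangent_space_def dfq_def using fv
  by (auto simp: image_iff)

lemma nperp_eq:
  assumes fu: "f_u f q \<noteq> 0" and fv: "f_v f q = 0"
  shows "nperp f q z = z - ((z \<bullet> f_u f q) / (f_u f q \<bullet> f_u f q)) *\<^sub>R f_u f q"
proof -
  define a where "a = f_u f q"
  have aa: "a \<bullet> a \<noteq> 0" using fu a_def by simp
  have T: "tangent_space f q = range (\<lambda>t. t *\<^sub>R a)" using tangent_eq[OF fv] a_def by simp
  have N: "normal_space f q = {n. n \<bullet> a = 0}"
    unfolding normal_space_def T by auto
  show ?thesis unfolding nperp_def a_def[symmetric]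
  proof (rule the_equality)
    show "z - (z \<bullet> a / (a \<bullet> a)) *\<^sub>R a \<in> normal_space f q \<and> z - (z - (z \<bullet> a / (a \<bullet> a)) *\<^sub>R a) \<in> tangent_space f q"
      unfolding N T using aa by (auto simp: inner_diff_left)
  next
    fix n assume "n \<in> normal_space f q \<and> z - n \<in> tangent_space f q"
    then obtain t where n: "n \<bullet> a = 0" and t: "z - n = t *\<^sub>R a" unfolding N T by auto
    have nz: "n = z - t *\<^sub>R a" using t by (simp add: algebra_simps)
    have "z \<bullet> a - t * (a \<bullet> a) = 0" using n unfolding nz by (simp add: inner_diff_left)
    then have "t = z \<bullet> a / (a \<bullet> a)" using aa by (simp add: field_simps)
    then show "n = z - (z \<bullet> a / (a \<bullet> a)) *\<^sub>R a" using nz by simp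
  qed
qed

lemma curv_eq:
  assumes fu: "f_u f q \<noteq> 0" and fv: "f_v f q = 0"
  shows "curvature_parabola f q = range (\<lambda>y. (1 / (f_u f q \<bullet> f_u f q)) *\<^sub>R nperp f q (f_uu f q)
          + y *\<^sub>R ((2 / norm (f_u f q)) *\<^sub>R nperp f q (f_uv f q)) + y\<^sup>2 *\<^sub>R nperp f q (f_vv f q))"
proof -
  define a where "a = f_u f q"
  define A where "A = nperp f q (f_uu f q)"
  define B where "B = nperp f q (f_uv f q)"
  define C where "C = nperp f q (f_vv f q)"
  have na: "norm a > 0" using fu a_def by simp
  have aa: "a \<bullet> a = (norm a)\<^sup>2" by (simp add: power2_norm_eq_inner)
  have I: "first_ff f q X X = (fst X)\<^sup>2 * (a \<bullet> a)" for X
    unfolding first_ff_def dfq_def fv a_def by (simp add: power2_eq_square)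
  have II: "second_ff f q X X = (fst X)\<^sup>2 *\<^sub>R A + (2 * fst X * snd X) *\<^sub>R B + (snd X)\<^sup>2 *\<^sub>R C" for X
    unfolding second_ff_def A_def B_def C_def by (simp add: power2_eq_square algebra_simps)
  define g where "g y = (1 / (a \<bullet> a)) *\<^sub>R A + y *\<^sub>R ((2 / norm a) *\<^sub>R B) + y\<^sup>2 *\<^sub>R C" for y
  have "curvature_parabola f q = range g"
  proof (rule set_eqI, rule iffI)
    fix p assume "p \<in> curvature_parabola f q"
    then obtain X where X: "first_ff f q X X = 1" and p: "p = second_ff f q X X"
      unfolding curvature_parabola_def by auto
    obtain x y where xy: "X = (x, y)" by (cases X)
    have x2: "x\<^sup>2 = 1 / (norm a)\<^sup>2" using X I xy aa na by (simp add: field_simps)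
    then have "x = 1 / norm a \<or> x = - (1 / norm a)"
      by (metis power_divide power_one power2_eq_iff)
    then show "p \<in> range g"
    proof
      assume x: "x = 1 / norm a"
      have "p = g y" unfolding p II xy g_def using x2 aa x by (simp add: algebra_simps)
      then show ?thesis by simp
    next
      assume x: "x = - (1 / norm a)"
      have "p = g (-y)" unfolding p II xy g_def using x2 aa x by (simp add: algebra_simps)
      then show ?thesis by simp
    qed
  next
    fix p assume "p \<in> range g"
    then obtain y where p: "p = g y" by auto
    let ?X = "(1 / norm a, y)"
    have "first_ff f q ?X ?X = 1" unfolding I using aa na by (simp add: field_simps)
    moreover have "p = second_ff f q ?X ?X" unfolding p II g_def using aa
      by (simp add: algebra_simps power_divide)
    ultimately show "p \<in> curvature_parabola f q" unfolding curvature_parabola_def by blast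
  qed
  then show ?thesis unfolding g_def a_def A_def B_def C_def .
qed

theorem mainTheorem6:
  fixes f :: "real \<times> real \<Rightarrow> real^3" and q :: "real \<times> real"
  assumes smooth: "\<exists>S. q \<in> S \<and> smooth_on S f"
    and corank1: "dim (tangent_space f q) = 1"
    and parab: "nondeg_parabola (curvature_parabola f q) \<or> half_line (curvature_parabola f q)"
    and fu: "f_u f q \<noteq> 0"
    and fv: "f_v f q = 0"
  shows "(\<forall>w. axial_vector (curvature_parabola f q) w \<longleftrightarrow>
            w = (1 / norm (cross3 (cross3 (f_u f q) (f_vv f q)) (f_u f q)))
                  *\<^sub>R cross3 (cross3 (f_u f q) (f_vv f q)) (f_u f q))
       \<and> (norm (f_u f q) = 1 \<and> norm (f_vv f q) = 1 \<and> f_u f q \<bullet> f_vv f q = 0 \<longrightarrow>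
            (\<forall>w. axial_vector (curvature_parabola f q) w \<longleftrightarrow> w = f_vv f q))"
proof -
  define a where "a = f_u f q"
  define b where "b = f_vv f q"
  define C where "C = nperp f q (f_vv f q)"
  define P where "P = curvature_parabola f q"
  define K where "K = cross3 (cross3 a b) a"
  have aa: "a \<bullet> a > 0" using fu a_def by simp
  have Ceq: "C = b - ((b \<bullet> a) / (a \<bullet> a)) *\<^sub>R a"
    unfolding C_def b_def a_def by (rule nperp_eq[OF fu fv])
  have KC: "K = (a \<bullet> a) *\<^sub>R C"
    unfolding K_def cross_cross Ceq using aa by (simp add: algebra_simps inner_commute)
  obtain A0 U where PR: "P = range (\<lambda>y. A0 + y *\<^sub>R U + y\<^sup>2 *\<^sub>R C)"
    unfolding P_def C_def using curv_eq[OF fu fv] by blast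
  have uniq: "C \<noteq> 0 \<and> w = (1 / norm C) *\<^sub>R C" if "axial_vector P w" for w
    using that unfolding axial_vector_def parabola_with_axis_def half_line_dir_def
  proof (elim disjE conjE exE)
    fix c e k assume "norm e = 1" "norm w = 1" "e \<bullet> w = 0" "k > 0"
      "P = {c + s *\<^sub>R e + (k * s\<^sup>2) *\<^sub>R w | s. True}"
    then show ?thesis using parab_axis[OF PR] by blast
  next
    fix c assume "norm w = 1" "P = {c + t *\<^sub>R w | t. t \<ge> 0}"
    then show ?thesis using half_axis[OF PR] by blast
  qed
  obtain w0 where w0: "axial_vector P w0"
    using parab unfolding P_def[symmetric] axial_vector_def nondeg_parabola_def half_line_def by blast
  have C0: "C \<noteq> 0" using uniq[OF w0] by simp
  have nK: "norm K = (a \<bullet> a) * norm C" unfolding KC using aa by simp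
  have KK: "(1 / norm K) *\<^sub>R K = (1 / norm C) *\<^sub>R C" unfolding nK KC using aa by simp
  have main: "\<forall>w. axial_vector P w \<longleftrightarrow> w = (1 / norm K) *\<^sub>R K"
    unfolding KK using uniq w0 by metis
  moreover have "norm a = 1 \<and> norm b = 1 \<and> a \<bullet> b = 0 \<longrightarrow> (1 / norm K) *\<^sub>R K = b"
  proof
    assume h: "norm a = 1 \<and> norm b = 1 \<and> a \<bullet> b = 0"
    then have "a \<bullet> a = 1" by (simp add: norm_eq_1)
    then have "K = b" unfolding K_def cross_cross using h by simp
    then show "(1 / norm K) *\<^sub>R K = b" using h by simp
  qed
  ultimately show ?thesis unfolding a_def b_def K_def P_def by auto
qed

end
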